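(* Let $(X,\preceq,\{H_n\})$ be a half-space order and let a group $G$ act on $X$ by quasi-automorphisms. Let $T_X:G\to\mathbb{R}$, $T_X(g)=\lim_{n\to\infty}\frac{h(g^na,a)}{n}$ (any $a\in X$), be the associated translation number, and let $\leq$ be the relation on $G$ induced by the action. Then $T_X$ sandwiches $\leq$, i.e. there is $C>0$ such that $\{g\in G: T_X(g)\geq C\}\subset G^+:=\{g\in G: g\geq e\}$.
   Context: A half-space filtration of $X$ is $\{H_n\}_{n\in\mathbb{Z}}$ with $H_{n+1}\subsetneq H_n$, $\bigcap H_n=\emptyset$, $\bigcup H_n=X$; height $h(a)=\sup\{n: a\in H_n\}$, $h(a,b)=h(a)-h(b)$. A half-space order $(X,\preceq,\{H_n\})$: $(X,\preceq)$ a poset, $\{H_n\}$ a half-space filtration, and for a constant $w$, $h(a,b)\geq w\Rightarrow a\succeq b$. The $G$-action (by bijections, not necessarily order-preserving) is by quasi-automorphisms if for some $d$, $|h(ga,gb)-h(a,b)|\leq d$ for all $g,a,b$; the limit defining $T_X$ then exists and is independent of $a$. The induced relation on $G$ is $g\leq h\Leftrightarrow\forall k\in G\,\forall x\in X:\ (kg).x\preceq(kh).x$. *)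

theory Defs
  imports Complex_Main "HOL-Algebra.Group"
begin

definition half_space_filtration :: "(int \<Rightarrow> 'x set) \<Rightarrow> bool" where
  "half_space_filtration H \<longleftrightarrow>
     (\<forall>n. H (n + 1) \<subset> H n) \<and> (\<Inter>n. H n) = {} \<and> (\<Union>n. H n) = UNIV"

definition height :: "(int \<Rightarrow> 'x set) \<Rightarrow> 'x \<Rightarrow> int" where
  "height H a = Sup {n. a \<in> H n}"

definition height2 :: "(int \<Rightarrow> 'x set) \<Rightarrow> 'x \<Rightarrow> 'x \<Rightarrow> int" where
  "height2 H a b = height H a - height H b"

definition half_space_order :: "('x \<Rightarrow> 'x \<Rightarrow> bool) \<Rightarrow> (int \<Rightarrow> 'x set) \<Rightarrow> bool" where
  "half_space_order prec H \<longleftrightarrow>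
     (\<forall>a. prec a a) \<and> (\<forall>a b. prec a b \<and> prec b a \<longrightarrow> a = b) \<and>
     (\<forall>a b c. prec a b \<and> prec b c \<longrightarrow> prec a c) \<and>
     half_space_filtration H \<and>
     (\<exists>w::real. \<forall>a b. real_of_int (height2 H a b) \<ge> w \<longrightarrow> prec b a)"

definition group_action_bij :: "('g, 'm) monoid_scheme \<Rightarrow> ('g \<Rightarrow> 'x \<Rightarrow> 'x) \<Rightarrow> bool" where
  "group_action_bij G act \<longleftrightarrow>
     group G \<and> (\<forall>g\<in>carrier G. bij (act g)) \<and> act \<one>\<^bsub>G\<^esub> = id \<and>
     (\<forall>g\<in>carrier G. \<forall>k\<in>carrier G. act (g \<otimes>\<^bsub>G\<^esub> k) = act g \<circ> act k)"

definition quasi_automorphic :: "('g, 'm) monoid_scheme \<Rightarrow> ('g \<Rightarrow> 'x \<Rightarrow> 'x) \<Rightarrow> (int \<Rightarrow> 'x set) \<Rightarrow> bool" where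
  "quasi_automorphic G act H \<longleftrightarrow>
     (\<exists>d::int. \<forall>g\<in>carrier G. \<forall>a b.
        \<bar>height2 H (act g a) (act g b) - height2 H a b\<bar> \<le> d)"

definition transl_number :: "('g, 'm) monoid_scheme \<Rightarrow> ('g \<Rightarrow> 'x \<Rightarrow> 'x) \<Rightarrow> (int \<Rightarrow> 'x set) \<Rightarrow> 'x \<Rightarrow> 'g \<Rightarrow> real" where
  "transl_number G act H a g =
     lim (\<lambda>n::nat. real_of_int (height2 H (act (g [^]\<^bsub>G\<^esub> n) a) a) / real n)"

definition induced_le :: "('g, 'm) monoid_scheme \<Rightarrow> ('g \<Rightarrow> 'x \<Rightarrow> 'x) \<Rightarrow> ('x \<Rightarrow> 'x \<Rightarrow> bool) \<Rightarrow> 'g \<Rightarrow> 'g \<Rightarrow> bool" where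
  "induced_le G act prec g h \<longleftrightarrow>
     (\<forall>k\<in>carrier G. \<forall>x. prec (act (k \<otimes>\<^bsub>G\<^esub> g) x) (act (k \<otimes>\<^bsub>G\<^esub> h) x))"

end

theory Submission imports Defs begin
lemma qa_mult:
  fixes f :: "nat \<Rightarrow> int"
  assumes qa: "\<And>n m. \<bar>f (n+m) - f n - f m\<bar> \<le> d"
  shows "\<bar>f (m*n) - int m * f n\<bar> \<le> (int m + 1) * d"
proof (induction m)
  case 0
  have "\<bar>f (0+0) - f 0 - f 0\<bar> \<le> d" by (rule qa)
  then show ?case by simp
next
  case (Suc m)
  have "\<bar>f (m*n + n) - f (m*n) - f n\<bar> \<le> d" by (rule qa)
  with Suc show ?case by (simp add: algebra_simps abs_le_iff)
qed

lemma qa_bound: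
  fixes f :: "nat \<Rightarrow> int"
  assumes qa: "\<And>n m. \<bar>f (n+m) - f n - f m\<bar> \<le> d"
    and n: "n \<ge> 1" and m: "m \<ge> 1"
  shows "\<bar>f n / real n - f m / real m\<bar> \<le> 2*d/n + 2*d/m"
proof -
  have d0: "d \<ge> 0" using qa[of 0 0] by simp
  have gen: "\<bar>f (m*n) / real (m*n) - f n / real n\<bar> \<le> 2*d/n" if "n\<ge>1" "m\<ge>1" for n m
  proof -
    have A0: "real_of_int \<bar>f (m*n) - int m * f n\<bar> \<le> real_of_int ((int m + 1) * d)"
      using qa_mult[OF qa, of m n] by linarith
    have A: "\<bar>real_of_int (f (m*n)) - real m * f n\<bar> \<le> (real m + 1) * d"
      using A0 by simp
    have "f (m*n) / real (m*n) - f n / real n = (real_of_int (f (m*n)) - real m * f n) / (real m * real n)"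
      using that by (simp add: field_simps)
    hence "\<bar>f (m*n) / real (m*n) - f n / real n\<bar> = \<bar>real_of_int (f (m*n)) - real m * f n\<bar> / (real m * real n)"
      using that by simp
    also have "\<dots> \<le> (real m + 1) * d / (real m * real n)"
      using A that by (intro divide_right_mono) auto
    also have "\<dots> \<le> 2*d/n"
    proof -
      have "(real m + 1) * d \<le> 2 * real m * d" using that d0 by (intro mult_right_mono) auto
      hence "(real m + 1) * d / (real m * real n) \<le> 2 * real m * d / (real m * real n)"
        using that by (intro divide_right_mono) auto
      also have "\<dots> = 2*d/n" using that by simp
      finally show ?thesis .
    qed
    finally show ?thesis .
  qed
  have 1: "\<bar>f (m*n) / real (m*n) - f n / real n\<bar> \<le> 2*d/n" using gen n m by blast
  have 2: "\<bar>f (n*m) / real (n*m) - f m / real m\<bar> \<le> 2*d/m" using gen n m by blast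
  have "n*m = m*n" by simp
  then have 3: "\<bar>f (m*n) / real (m*n) - f m / real m\<bar> \<le> 2*d/m" using 2 by (simp add: mult.commute)
  show ?thesis using abs_triangle_ineq4[of "f (m*n) / real (m*n) - f m / real m" "f (m*n) / real (m*n) - f n / real n"] 1 3
    by simp
qed
lemma qa_conv:
  fixes f :: "nat \<Rightarrow> int"
  assumes qa: "\<And>n m. \<bar>f (n+m) - f n - f m\<bar> \<le> d"
  shows "convergent (\<lambda>n. f n / real n)"
proof -
  have d0: "d \<ge> 0" using qa[of 0 0] by simp
  have "Cauchy (\<lambda>n. f n / real n)"
  proof (rule metric_CauchyI)
    fix e :: real assume e: "e > 0"
    obtain M :: nat where M: "M > 4*d/e" using reals_Archimedean2 by blast
    define N where "N = M + 1"
    have NM: "real N > 4*d/e" "N \<ge> 1" using M unfolding N_def by auto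
    show "\<exists>N. \<forall>m\<ge>N. \<forall>n\<ge>N. dist (f m / real m) (f n / real n) < e"
    proof (intro exI allI impI)
      fix m n assume mN: "m \<ge> N" and nN: "n \<ge> N"
      have b: "\<bar>f m / real m - f n / real n\<bar> \<le> 2*d/m + 2*d/n"
      proof -
        have "1 \<le> m" "1 \<le> n" using mN nN NM by auto
        thus ?thesis using qa_bound[OF qa, of m n] by simp
      qed
      have "4*d/e < N" using NM by simp
      hence "4*d < e * N" using e by (simp add: divide_less_eq mult.commute)
      have N0: "real N > 0" using NM by simp
      have "2*d/m \<le> 2*d/N" using mN N0 d0 by (intro divide_left_mono) auto
      moreover have "2*d/n \<le> 2*d/N" using nN N0 d0 by (intro divide_left_mono) auto
      moreover have "4*d/N < e" using \<open>4*d < e * N\<close> N0 by (simp add: divide_less_eq)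
      ultimately show "dist (f m / real m) (f n / real n) < e"
        using b by (simp add: dist_real_def)
    qed
  qed
  thus ?thesis by (simp add: Cauchy_convergent_iff)
qed

lemma qa_lim_le:
  fixes f :: "nat \<Rightarrow> int"
  assumes qa: "\<And>n m. \<bar>f (n+m) - f n - f m\<bar> \<le> d"
  shows "lim (\<lambda>n. f n / real n) \<le> f 1 + 4*d"
proof -
  have d0: "d \<ge> 0" using qa[of 0 0] by simp
  have c: "(\<lambda>n. f n / real n) \<longlonglongrightarrow> lim (\<lambda>n. f n / real n)"
    using qa_conv[OF qa] convergent_LIMSEQ_iff by blast
  show ?thesis
  proof (rule LIMSEQ_le_const2[OF c], intro exI allI impI)
    fix n :: nat assume n: "n \<ge> 1"
    have b: "\<bar>f n / real n - f 1 / real 1\<bar> \<le> 2*d/n + 2*d/1" using qa_bound[OF qa n, of 1] by simp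
    have "2*d/n \<le> 2*d" using n d0 by (simp add: divide_le_eq mult_le_cancel_left1)
    with b show "f n / real n \<le> f 1 + 4*d" by (simp add: abs_le_iff)
  qed
qed

theorem proposition2p6:
  fixes G :: "('g, 'm) monoid_scheme" and act :: "'g \<Rightarrow> 'x \<Rightarrow> 'x"
    and prec :: "'x \<Rightarrow> 'x \<Rightarrow> bool" and H :: "int \<Rightarrow> 'x set"
  assumes "half_space_order prec H"
    and "group_action_bij G act"
    and "quasi_automorphic G act H"
  shows "\<exists>C>0. \<forall>a. \<forall>g\<in>carrier G.
           transl_number G act H a g \<ge> C \<longrightarrow> induced_le G act prec \<one>\<^bsub>G\<^esub> g"
proof -
  obtain w :: real where w: "\<And>a b. real_of_int (height2 H a b) \<ge> w \<Longrightarrow> prec b a"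
    using assms(1) unfolding half_space_order_def by blast
  obtain d :: int where d: "\<And>g a b. g \<in> carrier G \<Longrightarrow> \<bar>height2 H (act g a) (act g b) - height2 H a b\<bar> \<le> d"
    using assms(3) unfolding quasi_automorphic_def by blast
  have grp: "group G" and comp: "\<And>g k. g\<in>carrier G \<Longrightarrow> k\<in>carrier G \<Longrightarrow> act (g \<otimes>\<^bsub>G\<^esub> k) = act g \<circ> act k"
    using assms(2) unfolding group_action_bij_def by auto
  interpret group G by (rule grp)
  have h2: "\<And>a b c. height2 H a c = height2 H a b + height2 H b c"
    unfolding height2_def by simp
  define C where "C = max 1 (w + 6 * d)"
  show ?thesis
  proof (intro exI conjI allI ballI impI)
    show "C > 0" unfolding C_def by simp
  next
    fix a g assume g: "g \<in> carrier G" and T: "transl_number G act H a g \<ge> C"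
    define f where "f n = height2 H (act (g [^]\<^bsub>G\<^esub> (n::nat)) a) a" for n
    have qa: "\<bar>f (n+m) - f n - f m\<bar> \<le> d" for n m
    proof -
      have "act (g [^]\<^bsub>G\<^esub> (n+m)) a = act (g [^]\<^bsub>G\<^esub> n) (act (g [^]\<^bsub>G\<^esub> m) a)"
        using g comp by (simp add: nat_pow_mult[symmetric])
      hence "f (n+m) = height2 H (act (g [^]\<^bsub>G\<^esub> n) (act (g [^]\<^bsub>G\<^esub> m) a)) (act (g [^]\<^bsub>G\<^esub> n) a) + f n"
        unfolding f_def using h2 by metis
      moreover have "\<bar>height2 H (act (g [^]\<^bsub>G\<^esub> n) (act (g [^]\<^bsub>G\<^esub> m) a)) (act (g [^]\<^bsub>G\<^esub> n) a) - f m\<bar> \<le> d"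
        unfolding f_def using d g by simp
      ultimately show ?thesis by simp
    qed
    have Tle: "transl_number G act H a g \<le> f 1 + 4*d"
      using qa_lim_le[OF qa] unfolding transl_number_def f_def by simp
    have f1: "f 1 = height2 H (act g a) a" unfolding f_def using g by simp
    show "induced_le G act prec \<one>\<^bsub>G\<^esub> g"
      unfolding induced_le_def
    proof (intro ballI allI)
      fix k x assume k: "k \<in> carrier G"
      have e1: "act (k \<otimes>\<^bsub>G\<^esub> \<one>\<^bsub>G\<^esub>) x = act k x" using k by simp
      have e2: "act (k \<otimes>\<^bsub>G\<^esub> g) x = act k (act g x)" using comp k g by simp
      have s1: "height2 H (act k (act g x)) (act k x) \<ge> height2 H (act g x) x - d"
        using d[OF k, of "act g x" x] by simp
      have s2: "height2 H (act g x) (act g a) \<ge> height2 H x a - d"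
        using d[OF g, of x a] by simp
      have s3: "height2 H (act g x) x = height2 H (act g x) (act g a) + height2 H (act g a) a + height2 H a x"
        using h2 by metis
      have s4: "height2 H x a = - height2 H a x" unfolding height2_def by simp
      have "real_of_int (height2 H (act k (act g x)) (act k x)) \<ge> w"
        using s1 s2 s3 s4 f1 Tle T unfolding C_def by linarith
      then show "prec (act (k \<otimes>\<^bsub>G\<^esub> \<one>\<^bsub>G\<^esub>) x) (act (k \<otimes>\<^bsub>G\<^esub> g) x)"
        using w e1 e2 by simp
    qed
  qed
qed

end
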